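(* Let $\Sigma,\Gamma,\Delta$ be polynomial orbit-finite sets with $\Delta$ disjoint from $\Sigma$ and $\Gamma$. If $f:\Sigma^*\to\Gamma^*$ is a composition of primes then so are $\mathsf{map}_\Delta f$ and $\mathsf{sub}_\Delta f$; and if $f:(\Sigma+\Delta)^*\to\Gamma^*$ is a composition of primes then so is $\mathsf{map}'_\Delta f$.
   Context: Atoms $\mathbb A$ are a countably infinite set; polynomial orbit-finite sets are built from $\mathbb A$ and singletons by finite products and disjoint unions; equivariant means commuting with all bijections of $\mathbb A$. Compositions of primes: the smallest class containing (i) length-preserving homomorphisms lifting letterwise an equivariant function between polynomial orbit-finite sets, (ii) classical Mealy machine functions (finite alphabets and states, transition $Q\times\Sigma\to Q\times\Gamma$), (iii) atom propagation $(\mathbb A+\{\epsilon,\downarrow\})^*\to(\mathbb A+\bot)^*$ (position $i$ outputs the atom of position $j$ if $i$ is labelled $\downarrow$, $j<i$ carries an atom, and all positions strictly between are labelled $\epsilon$; otherwise $\bot$), closed under sequential composition and parallel composition $f_1|f_2:(\Sigma_1\times\Sigma_2)^*\to(\Gamma_1\times\Gamma_2)^*$. All such functions are length-preserving. Combinators, for $w_0,\dots,w_n\in\Sigma^*$ and $a_1,\dots,a_n\in\Delta$: $\mathsf{map}_\Delta f(w_0a_1w_1\cdots a_nw_n)=f(w_0)a_1f(w_1)\cdots a_nf(w_n)$; $\mathsf{sub}_\Delta f$ applies $f$ to $w_0w_1\cdots w_n$ and reinserts the separators $a_1,\dots,a_n$ at their original positions; $\mathsf{map}'_\Delta f(w_0a_1w_1\cdots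 a_nw_n)=f(w_0a_1)f(w_1a_2)\cdots f(w_{n-1}a_n)f(w_n)$. *)

theory Defs
  imports Main
begin

type_synonym atom = nat

datatype pof = PAtom | PUnit | PProd pof pof | PSum pof pof

text \<open>A universal type of values in which all polynomial orbit-finite sets live.\<close>
datatype val = VAtom atom | VUnit | VPair val val | VInl val | VInr val

fun elem :: "pof \<Rightarrow> val \<Rightarrow> bool" where
  "elem PAtom v = (\<exists>a. v = VAtom a)"
| "elem PUnit v = (v = VUnit)"
| "elem (PProd S T) v = (\<exists>x y. v = VPair x y \<and> elem S x \<and> elem T y)"
| "elem (PSum S T) v = ((\<exists>x. v = VInl x \<and> elem S x) \<or> (\<exists>y. v = VInr y \<and> elem T y))"

definition words :: "pof \<Rightarrow> val list set" where
  "words S = lists {x. elem S x}"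

fun act :: "(atom \<Rightarrow> atom) \<Rightarrow> val \<Rightarrow> val" where
  "act \<pi> (VAtom a) = VAtom (\<pi> a)"
| "act \<pi> VUnit = VUnit"
| "act \<pi> (VPair x y) = VPair (act \<pi> x) (act \<pi> y)"
| "act \<pi> (VInl x) = VInl (act \<pi> x)"
| "act \<pi> (VInr x) = VInr (act \<pi> x)"

definition equivariant_fun :: "pof \<Rightarrow> pof \<Rightarrow> (val \<Rightarrow> val) \<Rightarrow> bool" where
  "equivariant_fun S T h \<longleftrightarrow>
     (\<forall>x. elem S x \<longrightarrow> elem T (h x)) \<and>
     (\<forall>\<pi> x. bij \<pi> \<longrightarrow> elem S x \<longrightarrow> h (act \<pi> x) = act \<pi> (h x))"

text \<open>Finite (atom-free) polynomial sets: the classical finite alphabets.\<close>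
fun atomless :: "pof \<Rightarrow> bool" where
  "atomless PAtom = False"
| "atomless PUnit = True"
| "atomless (PProd S T) = (atomless S \<and> atomless T)"
| "atomless (PSum S T) = (atomless S \<and> atomless T)"

fun mealy :: "(nat \<Rightarrow> val \<Rightarrow> nat \<times> val) \<Rightarrow> nat \<Rightarrow> val list \<Rightarrow> val list" where
  "mealy \<delta> q [] = []"
| "mealy \<delta> q (x # xs) = snd (\<delta> q x) # mealy \<delta> (fst (\<delta> q x)) xs"

text \<open>Atom propagation, input alphabet A + {eps, down}, output A + bot.\<close>
definition eps :: val where "eps = VInr (VInl VUnit)"
definition down :: val where "down = VInr (VInr VUnit)"
definition bot :: val where "bot = VInr VUnit"

definition prop_src :: "val list \<Rightarrow> nat \<Rightarrow> nat \<Rightarrow> bool" where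
  "prop_src w i j \<longleftrightarrow> j < i \<and> (\<exists>a. w ! j = VInl (VAtom a)) \<and>
                       (\<forall>k. j < k \<and> k < i \<longrightarrow> w ! k = eps)"

definition propagate :: "val list \<Rightarrow> val list" where
  "propagate w = map (\<lambda>i. if w ! i = down \<and> (\<exists>j. prop_src w i j)
                           then w ! (THE j. prop_src w i j) else bot) [0..<length w]"

fun vfst :: "val \<Rightarrow> val" where "vfst (VPair x y) = x" | "vfst _ = VUnit"
fun vsnd :: "val \<Rightarrow> val" where "vsnd (VPair x y) = y" | "vsnd _ = VUnit"

definition par :: "(val list \<Rightarrow> val list) \<Rightarrow> (val list \<Rightarrow> val list) \<Rightarrow> val list \<Rightarrow> val list" where
  "par f1 f2 w = map2 VPair (f1 (map vfst w)) (f2 (map vsnd w))"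

text \<open>cp S T f: f, viewed as a function S* \<rightarrow> T*, is a composition of primes.
  Functions are identified when they agree on S*.\<close>
inductive cp :: "pof \<Rightarrow> pof \<Rightarrow> (val list \<Rightarrow> val list) \<Rightarrow> bool" where
  prime_hom: "equivariant_fun S T h \<Longrightarrow> cp S T (map h)"
| prime_mealy: "atomless S \<Longrightarrow> atomless T \<Longrightarrow> finite Q \<Longrightarrow> q0 \<in> Q \<Longrightarrow>
          (\<forall>q x. q \<in> Q \<longrightarrow> elem S x \<longrightarrow> fst (\<delta> q x) \<in> Q \<and> elem T (snd (\<delta> q x))) \<Longrightarrow>
          cp S T (mealy \<delta> q0)"
| prime_prop: "cp (PSum PAtom (PSum PUnit PUnit)) (PSum PAtom PUnit) propagate"
| comp_seq: "cp S T f \<Longrightarrow> cp T U g \<Longrightarrow> cp S U (g \<circ> f)"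
| comp_par: "cp S1 T1 f1 \<Longrightarrow> cp S2 T2 f2 \<Longrightarrow> cp (PProd S1 S2) (PProd T1 T2) (par f1 f2)"
| ext_dom: "cp S T f \<Longrightarrow> (\<forall>w \<in> words S. g w = f w) \<Longrightarrow> cp S T g"

section \<open>Combinators over S + D (tags: VInl for S-letters, VInr for D-letters)\<close>

fun isL :: "val \<Rightarrow> bool" where "isL (VInl x) = True" | "isL _ = False"
fun unL :: "val \<Rightarrow> val" where "unL (VInl x) = x" | "unL x = x"

text \<open>splitD w = ([w0,...,wn], [a1,...,an]) with w = w0 a1 w1 ... an wn.\<close>
fun splitD :: "val list \<Rightarrow> val list list \<times> val list" where
  "splitD [] = ([[]], [])"
| "splitD (x # xs) = (case splitD xs of (bs, as) \<Rightarrow>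
      if isL x then ((x # hd bs) # tl bs, as) else ([] # bs, x # as))"

definition mapD :: "(val list \<Rightarrow> val list) \<Rightarrow> val list \<Rightarrow> val list" where
  "mapD f w = (case splitD w of (bs, as) \<Rightarrow>
     map VInl (f (map unL (hd bs))) @
     concat (map2 (\<lambda>a b. a # map VInl (f (map unL b))) as (tl bs)))"

fun reinsert :: "val list \<Rightarrow> val list \<Rightarrow> val list" where
  "reinsert ys [] = []"
| "reinsert ys (x # xs) = (if isL x then VInl (hd ys) # reinsert (tl ys) xs
                           else x # reinsert ys xs)"

definition subD :: "(val list \<Rightarrow> val list) \<Rightarrow> val list \<Rightarrow> val list" where
  "subD f w = reinsert (f (map unL (filter isL w))) w"

definition mapD' :: "(val list \<Rightarrow> val list) \<Rightarrow> val list \<Rightarrow> val list" where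
  "mapD' f w = (case splitD w of (bs, as) \<Rightarrow>
     concat (map2 (\<lambda>b a. f (b @ [a])) bs as) @ f (last bs))"

end

theory Submission
  imports Defs
begin


lemma pof_nonempty: "\<exists>v. elem T v"
  by (induction T) auto

fun gscan :: "('s \<Rightarrow> val \<Rightarrow> 's \<times> val) \<Rightarrow> 's \<Rightarrow> val list \<Rightarrow> val list" where
  "gscan \<delta> q [] = []"
| "gscan \<delta> q (x # xs) = snd (\<delta> q x) # gscan \<delta> (fst (\<delta> q x)) xs"

fun grun :: "('s \<Rightarrow> val \<Rightarrow> 's \<times> val) \<Rightarrow> 's \<Rightarrow> val list \<Rightarrow> 's" where
  "grun \<delta> q [] = q"
| "grun \<delta> q (x # xs) = grun \<delta> (fst (\<delta> q x)) xs"

lemma gscan_append: "gscan \<delta> q (xs @ ys) = gscan \<delta> q xs @ gscan \<delta> (grun \<delta> q xs) ys"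
  by (induction xs arbitrary: q) auto

lemma grun_append: "grun \<delta> q (xs @ ys) = grun \<delta> (grun \<delta> q xs) ys"
  by (induction xs arbitrary: q) auto

lemma length_gscan[simp]: "length (gscan \<delta> q xs) = length xs"
  by (induction xs arbitrary: q) auto

lemma mealy_gscan: "mealy \<delta> q = gscan \<delta> q"
proof
  fix w show "mealy \<delta> q w = gscan \<delta> q w" by (induction w arbitrary: q) auto
qed

lemma gscan_words:
  assumes "\<forall>s x. s \<in> I \<longrightarrow> elem S x \<longrightarrow> fst (\<delta> s x) \<in> I \<and> elem T (snd (\<delta> s x))"
    "q \<in> I" "w \<in> words S"
  shows "gscan \<delta> q w \<in> words T"
  using assms(2,3) by (induction w arbitrary: q) (auto simp: words_def assms(1))

definition isAtomL :: "val \<Rightarrow> bool" where "isAtomL v = (\<exists>a. v = VInl (VAtom a))"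

definition pstep :: "val option \<Rightarrow> val \<Rightarrow> val option \<times> val" where
  "pstep s x = (if isAtomL x then (Some x, bot) else if x = eps then (s, bot)
     else if x = down then (None, case s of Some v \<Rightarrow> v | None \<Rightarrow> bot) else (None, bot))"

definition src :: "val list \<Rightarrow> nat \<Rightarrow> bool" where
  "src w j = (j < length w \<and> isAtomL (w ! j) \<and> (\<forall>k. j < k \<and> k < length w \<longrightarrow> w ! k = eps))"

lemma eps_not_atom[simp]: "\<not> isAtomL eps" "\<not> isAtomL down" "eps \<noteq> down" "down \<noteq> eps"
  by (auto simp: isAtomL_def eps_def down_def)

lemma src_unique: "src w j1 \<Longrightarrow> src w j2 \<Longrightarrow> j1 = j2"
  unfolding src_def by (metis eps_not_atom(1) linorder_neqE_nat)

lemma src_the: "src w j \<Longrightarrow> (THE j. src w j) = j"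
  using src_unique by blast

lemma grun_pstep: "grun pstep None w = (if \<exists>j. src w j then Some (w ! (THE j. src w j)) else None)"
proof (induction w rule: rev_induct)
  case Nil then show ?case by (simp add: src_def)
next
  case (snoc x w)
  have g: "grun pstep None (w @ [x]) = fst (pstep (grun pstep None w) x)"
    by (simp add: grun_append)
  show ?case
  proof (cases "isAtomL x")
    case True
    have s: "src (w @ [x]) (length w)" using True by (auto simp: src_def)
    show ?thesis unfolding g using True s src_the[OF s] by (auto simp: pstep_def)
  next
    case na: False
    show ?thesis
    proof (cases "x = eps")
      case True
      have eq: "src (w @ [x]) j = src w j" for j
        using True by (auto simp: src_def nth_append less_Suc_eq)
      have eq': "src (w @ [x]) = src w" by (rule ext) (rule eq)
      have st: "grun pstep None (w @ [x]) = grun pstep None w"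
        using g True by (simp add: pstep_def)
      show ?thesis
      proof (cases "\<exists>j. src w j")
        case True
        then obtain j where j: "src w j" by blast
        then have "j < length w" by (simp add: src_def)
        then show ?thesis unfolding st eq' using j snoc src_the[OF j]
          by (auto simp: nth_append)
      next
        case False then show ?thesis unfolding st eq' using snoc by auto
      qed
    next
      case ne: False
      have "\<not> src (w @ [x]) j" for j
      proof
        assume "src (w @ [x]) j"
        then show False using na ne
          by (auto simp: src_def nth_append less_Suc_eq split: if_splits)
      qed
      then show ?thesis unfolding g using na ne by (auto simp: pstep_def)
    qed
  qed
qed

lemma propagate_snoc:
  "propagate (w @ [x]) = propagate w @ [snd (pstep (grun pstep None w) x)]"
proof -
  have ps: "prop_src (w @ [x]) i j = prop_src w i j" if "i < length w" for i j
    using that unfolding prop_src_def by (auto simp: nth_append)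
  have pn: "prop_src (w @ [x]) (length w) j = src w j" for j
    unfolding prop_src_def src_def isAtomL_def by (auto simp: nth_append)
  have A: "map (\<lambda>i. if (w @ [x]) ! i = down \<and> (\<exists>j. prop_src (w @ [x]) i j)
                           then (w @ [x]) ! (THE j. prop_src (w @ [x]) i j) else bot) [0..<length w]
        = propagate w"
    unfolding propagate_def
  proof (rule map_cong[OF refl])
    fix i assume "i \<in> set [0..<length w]"
    then have i: "i < length w" by simp
    have pe: "prop_src (w @ [x]) i = prop_src w i" using ps[OF i] by blast
    moreover have "prop_src w i j \<Longrightarrow> j < length w" for j using i by (simp add: prop_src_def)
    moreover have "(\<exists>j. prop_src w i j) \<Longrightarrow> prop_src w i (THE j. prop_src w i j)"
    proof -
      assume "\<exists>j. prop_src w i j"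
      then obtain j where j: "prop_src w i j" by blast
      have u: "prop_src w i j' \<Longrightarrow> j' = j" for j'
        using j unfolding prop_src_def
        by (metis eps_not_atom(1) isAtomL_def linorder_neqE_nat)
      show ?thesis using j u by (metis theI)
    qed
    ultimately show "(if (w @ [x]) ! i = down \<and> (\<exists>j. prop_src (w @ [x]) i j)
                           then (w @ [x]) ! (THE j. prop_src (w @ [x]) i j) else bot) =
         (if w ! i = down \<and> (\<exists>j. prop_src w i j) then w ! (THE j. prop_src w i j) else bot)"
      unfolding pe using i by (auto simp: nth_append)
  qed
  have pn': "prop_src (w @ [x]) (length w) = src w" by (rule ext) (rule pn)
  have B: "(if (w @ [x]) ! length w = down \<and> (\<exists>j. prop_src (w @ [x]) (length w) j)
                           then (w @ [x]) ! (THE j. prop_src (w @ [x]) (length w) j) else bot)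
         = snd (pstep (grun pstep None w) x)"
  proof (cases "\<exists>j. src w j")
    case True
    then obtain j where j: "src w j" by blast
    then have "j < length w" by (simp add: src_def)
    then show ?thesis unfolding pn' using j src_the[OF j] grun_pstep[of w]
      by (auto simp: pstep_def nth_append)
  next
    case False then show ?thesis unfolding pn' using grun_pstep[of w]
      by (auto simp: pstep_def)
  qed
  show ?thesis
    unfolding propagate_def[of "w @ [x]"] using A B by simp
qed

lemma propagate_gscan: "propagate w = gscan pstep None w"
proof (induction w rule: rev_induct)
  case Nil then show ?case by (simp add: propagate_def)
next
  case (snoc x w) then show ?case by (simp add: propagate_snoc gscan_append)
qed



lemma words_simps[simp]: "[] \<in> words S" "(x # xs \<in> words S) = (elem S x \<and> xs \<in> words S)"
  "(xs @ ys \<in> words S) = (xs \<in> words S \<and> ys \<in> words S)"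
  by (auto simp: words_def)

lemma map2_words: "a \<in> words S \<Longrightarrow> b \<in> words T \<Longrightarrow> length a = length b \<Longrightarrow>
   map2 VPair a b \<in> words (PProd S T)"
proof (induction a arbitrary: b)
  case (Cons x a)
  then obtain y b' where "b = y # b'" by (cases b) auto
  then show ?case using Cons by auto
qed simp

lemma cp_words: "cp S T f \<Longrightarrow> w \<in> words S \<Longrightarrow> length (f w) = length w \<and> f w \<in> words T"
proof (induction arbitrary: w rule: cp.induct)
  case (prime_hom S T h)
  then show ?case by (auto simp: equivariant_fun_def words_def)
next
  case (prime_mealy S T Q q0 \<delta>)
  then show ?case unfolding mealy_gscan using gscan_words[of Q S \<delta> T q0 w] by auto
next
  case prime_prop
  let ?I = "{s. \<forall>v. s = Some v \<longrightarrow> elem (PSum PAtom PUnit) v}"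
  have "\<forall>s x. s \<in> ?I \<longrightarrow> elem (PSum PAtom (PSum PUnit PUnit)) x \<longrightarrow>
      fst (pstep s x) \<in> ?I \<and> elem (PSum PAtom PUnit) (snd (pstep s x))"
    by (auto simp: pstep_def bot_def isAtomL_def eps_def down_def split: option.splits)
  then have "gscan pstep None w \<in> words (PSum PAtom PUnit)"
    by (rule gscan_words) (simp_all add: prime_prop)
  then show ?case unfolding propagate_gscan by simp
next
  case (comp_seq S T f U g)
  then show ?case by fastforce
next
  case (comp_par S1 T1 f1 S2 T2 f2)
  have w1: "map vfst w \<in> words S1" and w2: "map vsnd w \<in> words S2"
    using comp_par.prems by (induction w; auto)+
  show ?case using comp_par.IH(1)[OF w1] comp_par.IH(2)[OF w2] map2_words
    by (simp add: par_def)
next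
  case (ext_dom S T f g)
  then show ?case by auto
qed


fun kind :: "val \<Rightarrow> nat" where
  "kind (VInl x) = 0"
| "kind (VInr (VInl (VInl x))) = 1"
| "kind (VInr (VInl (VInr x))) = 2"
| "kind (VInr (VInr x)) = 3"
| "kind _ = 1"

abbreviation KA :: "pof \<Rightarrow> pof \<Rightarrow> pof" where "KA X D \<equiv> PSum X (PSum (PSum D D) X)"

definition isD :: "val \<Rightarrow> bool" where "isD x = (kind x = 0 \<or> kind x = 3)"
definition isR :: "val \<Rightarrow> bool" where "isR x = (kind x = 2 \<or> kind x = 3)"

fun dval :: "val \<Rightarrow> val" where
  "dval (VInl x) = x"
| "dval (VInr (VInr x)) = x"
| "dval x = x"

definition tagas :: "val \<Rightarrow> val \<Rightarrow> val" where
  "tagas x y = (if kind x = 3 then VInr (VInr y) else VInl y)"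

definition datas :: "val list \<Rightarrow> val list" where "datas u = map dval (filter isD u)"

fun reins :: "val list \<Rightarrow> val list \<Rightarrow> val list" where
  "reins ys [] = []"
| "reins ys (x # xs) = (if isD x then tagas x (hd ys) # reins (tl ys) xs else x # reins ys xs)"

fun Kacc :: "(val list \<Rightarrow> val list) \<Rightarrow> val list \<Rightarrow> val list \<Rightarrow> val list" where
  "Kacc f acc [] = reins (f (datas acc)) acc"
| "Kacc f acc (x # xs) = (if isR x then reins (f (datas (acc @ [x]))) (acc @ [x]) @ Kacc f [] xs
                         else Kacc f (acc @ [x]) xs)"

definition K :: "(val list \<Rightarrow> val list) \<Rightarrow> val list \<Rightarrow> val list" where "K f w = Kacc f [] w"

lemma kind_tagas[simp]: "kind (tagas x y) = (if kind x = 3 then 3 else 0)"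
  by (simp add: tagas_def)
lemma dval_tagas[simp]: "dval (tagas x y) = y"
  by (simp add: tagas_def)
lemma isD_tagas[simp]: "isD (tagas x y)"
  by (simp add: isD_def)
lemma tagas_tagas[simp]: "tagas (tagas x y) z = tagas x z"
  by (simp add: tagas_def)

lemma length_reins[simp]: "length (reins ys u) = length u"
  by (induction u arbitrary: ys) auto

lemma kinds_reins: "map kind (reins ys u) = map kind u"
  by (induction u arbitrary: ys) (auto simp: isD_def)

lemma isR_kind: "isR x = (kind x = 2 \<or> kind x = 3)" by (simp add: isR_def)

lemma reins_noR: "\<forall>x\<in>set u. \<not> isR x \<Longrightarrow> \<forall>x\<in>set (reins ys u). \<not> isR x"
  by (induction u arbitrary: ys) (auto simp: isD_def isR_def)

lemma reins_append: "reins ys (u @ v) = reins ys u @ reins (drop (length (datas u)) ys) v"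
  by (induction u arbitrary: ys) (auto simp: datas_def drop_Suc tl_drop)

lemma length_datas_reins[simp]: "length (datas (reins ys u)) = length (datas u)"
  by (induction u arbitrary: ys) (auto simp: datas_def)

lemma datas_reins: "length ys = length (datas u) \<Longrightarrow> datas (reins ys u) = ys"
proof (induction u arbitrary: ys)
  case Nil then show ?case by (simp add: datas_def)
next
  case (Cons x u)
  show ?case
  proof (cases "isD x")
    case True
    then obtain y ys' where "ys = y # ys'" using Cons.prems by (cases ys) (auto simp: datas_def)
    then show ?thesis using Cons True by (auto simp: datas_def)
  next
    case False then show ?thesis using Cons by (auto simp: datas_def)
  qed
qed

lemma reins_reins[simp]: "reins zs (reins ys u) = reins zs u"
  by (induction u arbitrary: ys zs) auto

lemma Kacc_noR: "\<forall>x\<in>set u. \<not> isR x \<Longrightarrow> Kacc f acc (u @ rest) = Kacc f (acc @ u) rest"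
  by (induction u arbitrary: acc) auto

lemma K_noR: "\<forall>x\<in>set u. \<not> isR x \<Longrightarrow> K f u = reins (f (datas u)) u"
  unfolding K_def using Kacc_noR[of u f "[]" "[]"] by simp

lemma K_R: "\<forall>x\<in>set u. \<not> isR x \<Longrightarrow> isR r \<Longrightarrow>
   K f (u @ r # rest) = reins (f (datas (u @ [r]))) (u @ [r]) @ K f rest"
  unfolding K_def using Kacc_noR[of u f "[]" "r # rest"] by simp

lemma block_induct:
  assumes "\<And>u. \<forall>x\<in>set u. p x \<Longrightarrow> P u"
    "\<And>u a rest. \<forall>x\<in>set u. p x \<Longrightarrow> \<not> p a \<Longrightarrow> P rest \<Longrightarrow> P (u @ a # rest)"
  shows "P w"
proof (induction "length w" arbitrary: w rule: less_induct)
  case less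
  show ?case
  proof (cases "dropWhile p w")
    case Nil
    then have "w = takeWhile p w" by (metis append_Nil2 takeWhile_dropWhile_id)
    then show ?thesis using assms(1) by (metis set_takeWhileD)
  next
    case (Cons a rest)
    then have w: "w = takeWhile p w @ a # rest" and na: "\<not> p a"
      by (auto simp: dropWhile_eq_Cons_conv)
    have "length rest < length w" by (subst w) simp
    then have "P rest" using less by blast
    then show ?thesis using assms(2)[OF _ na] w by (metis set_takeWhileD)
  qed
qed

lemma elem_KA_D: "elem (KA X D) x \<Longrightarrow> isD x \<Longrightarrow> elem X (dval x)"
  by (auto simp: isD_def)

lemma datas_words: "u \<in> words (KA X D) \<Longrightarrow> datas u \<in> words X"
  by (induction u) (auto simp: datas_def isD_def)

lemma kind_act[simp]: "kind (act \<pi> x) = kind x"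
  by (induction x rule: kind.induct) auto
lemma dval_act[simp]: "dval (act \<pi> x) = act \<pi> (dval x)"
  by (induction x rule: dval.induct) auto
lemma isD_act[simp]: "isD (act \<pi> x) = isD x" by (simp add: isD_def)
lemma isR_act[simp]: "isR (act \<pi> x) = isR x" by (simp add: isR_def)
lemma tagas_act: "tagas (act \<pi> x) (act \<pi> y) = act \<pi> (tagas x y)" by (simp add: tagas_def)



definition resetd :: "('s \<Rightarrow> val \<Rightarrow> 's \<times> val) \<Rightarrow> 's \<Rightarrow> 's \<Rightarrow> val \<Rightarrow> 's \<times> val" where
  "resetd \<delta> q0 q x = (if kind x = 0 then (fst (\<delta> q (dval x)), VInl (snd (\<delta> q (dval x))))
     else if kind x = 3 then (q0, VInr (VInr (snd (\<delta> q (dval x)))))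
     else if kind x = 2 then (q0, x) else (q, x))"

lemma resetd_0[simp]: "kind x = 0 \<Longrightarrow> resetd \<delta> q0 q x = (fst (\<delta> q (dval x)), VInl (snd (\<delta> q (dval x))))"
  by (simp add: resetd_def)
lemma resetd_1[simp]: "kind x = 1 \<Longrightarrow> resetd \<delta> q0 q x = (q, x)"
  by (simp add: resetd_def)
lemma resetd_2[simp]: "kind x = 2 \<Longrightarrow> resetd \<delta> q0 q x = (q0, x)"
  by (simp add: resetd_def)
lemma resetd_3[simp]: "kind x = 3 \<Longrightarrow> resetd \<delta> q0 q x = (q0, VInr (VInr (snd (\<delta> q (dval x)))))"
  by (simp add: resetd_def)

lemma reins_app_long: "length A = length (datas u) \<Longrightarrow> reins (A @ B) u = reins A u"
proof (induction u arbitrary: A)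
  case (Cons x u)
  show ?case
  proof (cases "isD x")
    case True then show ?thesis using Cons by (cases A) (auto simp: datas_def)
  next
    case False then show ?thesis using Cons by (simp add: datas_def)
  qed
qed simp

lemma seg_gscan:
  "\<forall>x\<in>set u. \<not> isR x \<Longrightarrow> reins (gscan \<delta> q (datas u)) u = gscan (resetd \<delta> q0) q u \<and>
     grun (resetd \<delta> q0) q u = grun \<delta> q (datas u)"
proof (induction u arbitrary: q)
  case Nil then show ?case by (simp add: datas_def)
next
  case (Cons x u)
  then have nr: "\<not> isR x" and IH: "reins (gscan \<delta> q' (datas u)) u = gscan (resetd \<delta> q0) q' u \<and>
     grun (resetd \<delta> q0) q' u = grun \<delta> q' (datas u)" for q' by auto
  show ?case
  proof (cases "kind x = 0")
    case True
    then show ?thesis using IH by (auto simp: datas_def isD_def tagas_def)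
  next
    case False
    then have "kind x = 1" using nr by (simp add: isR_def) (induction x rule: kind.induct; simp)
    then show ?thesis using IH by (auto simp: datas_def isD_def tagas_def)
  qed
qed

lemma kind_cases: "kind x = 0 \<or> kind x = 1 \<or> kind x = 2 \<or> kind x = 3"
  by (induction x rule: kind.induct) auto

lemma K_gscan: "K (gscan \<delta> q0) w = gscan (resetd \<delta> q0) q0 w"
proof (induction w rule: block_induct[where p = "\<lambda>x. \<not> isR x"])
  case (1 u)
  then show ?case using seg_gscan[OF 1, of \<delta> q0 q0] by (simp add: K_noR)
next
  case (2 u r rest)
  then have rr: "isR r" by simp
  note sg = seg_gscan[OF 2(1), of \<delta> q0 q0]
  let ?s = "grun \<delta> q0 (datas u)"
  have dl: "datas (u @ [r]) = datas u @ (if isD r then [dval r] else [])"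
    by (simp add: datas_def)
  have a: "K (gscan \<delta> q0) (u @ r # rest) =
     reins (gscan \<delta> q0 (datas (u @ [r]))) (u @ [r]) @ K (gscan \<delta> q0) rest"
    by (rule K_R[OF 2(1) rr])
  have b: "reins (gscan \<delta> q0 (datas (u @ [r]))) (u @ [r]) =
      gscan (resetd \<delta> q0) q0 u @ [snd (resetd \<delta> q0 ?s r)]"
    unfolding dl gscan_append reins_append using sg rr kind_cases[of r]
    by (auto simp: reins_app_long isD_def isR_def tagas_def)
  have c: "gscan (resetd \<delta> q0) q0 (u @ r # rest) = gscan (resetd \<delta> q0) q0 u @
       snd (resetd \<delta> q0 ?s r) # gscan (resetd \<delta> q0) q0 rest"
    using sg rr kind_cases[of r] by (auto simp: isR_def gscan_append)
  show ?case unfolding a b c using 2(3) by simp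
qed



lemma map_map2: "map f (map2 g a b) = map2 (\<lambda>x y. f (g x y)) a b"
  by (induction a arbitrary: b) (auto split: list.split)

lemma vfst_act[simp]: "vfst (act \<pi> v) = act \<pi> (vfst v)"
  by (cases v rule: vfst.cases) auto
lemma vsnd_act[simp]: "vsnd (act \<pi> v) = act \<pi> (vsnd v)"
  by (cases v rule: vsnd.cases) auto

lemma act_consts[simp]: "act \<pi> eps = eps" "act \<pi> down = down" "act \<pi> bot = bot"
  by (simp_all add: eps_def down_def bot_def)

lemma act_is_VUnit[simp]: "(act \<pi> v = VUnit) = (v = VUnit)"
  by (cases v) auto
lemma act_is_VInr[simp]: "(act \<pi> v = VInr w) = (\<exists>w'. v = VInr w' \<and> act \<pi> w' = w)"
  by (cases v) auto
lemma act_eq_down[simp]: "(act \<pi> v = down) = (v = down)"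
  by (auto simp: down_def)

lemma elem_KA_cases:
  assumes "elem (KA X D) x"
  obtains (d0) a where "x = VInl a" "elem X a"
  | (d1) d where "x = VInr (VInl (VInl d))" "elem D d"
  | (d2) d where "x = VInr (VInl (VInr d))" "elem D d"
  | (d3) a where "x = VInr (VInr a)" "elem X a"
  using assms by auto

definition hK :: "(val \<Rightarrow> val) \<Rightarrow> val \<Rightarrow> val" where
  "hK h x = (if kind x = 0 then VInl (h (dval x)) else if kind x = 3 then VInr (VInr (h (dval x))) else x)"

lemma map_gscan: "map h = gscan (\<lambda>(_::unit) x. ((), h x)) ()"
proof
  fix w show "map h w = gscan (\<lambda>(_::unit) x. ((), h x)) () w" by (induction w) auto
qed

lemma K_hom: "K (map h) w = map (hK h) w"
proof -
  have "gscan (resetd (\<lambda>(_::unit) x. ((), h x)) ()) () w = map (hK h) w"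
  proof (induction w)
    case (Cons a w) then show ?case using kind_cases[of a] by (auto simp: hK_def)
  qed simp
  then show ?thesis by (simp add: map_gscan K_gscan)
qed

lemma eq_hK: "equivariant_fun S T h \<Longrightarrow> equivariant_fun (KA S D) (KA T D) (hK h)"
  unfolding equivariant_fun_def
proof (intro conjI allI impI)
  fix x assume h: "(\<forall>x. elem S x \<longrightarrow> elem T (h x)) \<and>
    (\<forall>\<pi> x. bij \<pi> \<longrightarrow> elem S x \<longrightarrow> h (act \<pi> x) = act \<pi> (h x))" and x: "elem (KA S D) x"
  from x show "elem (KA T D) (hK h x)" using h by (cases rule: elem_KA_cases) (auto simp: hK_def)
next
  fix \<pi> :: "nat \<Rightarrow> nat" and x assume h: "(\<forall>x. elem S x \<longrightarrow> elem T (h x)) \<and>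
    (\<forall>\<pi> x. bij \<pi> \<longrightarrow> elem S x \<longrightarrow> h (act \<pi> x) = act \<pi> (h x))" and b: "bij \<pi>" and x: "elem (KA S D) x"
  from x show "hK h (act \<pi> x) = act \<pi> (hK h x)" using h b by (cases rule: elem_KA_cases) (auto simp: hK_def)
qed

lemma cp_ext: "cp S T f \<Longrightarrow> (\<And>w. w \<in> words S \<Longrightarrow> g w = f w) \<Longrightarrow> cp S T g"
  by (rule ext_dom) auto

lemma cp_homK: assumes "equivariant_fun S T h" shows "cp (KA S D) (KA T D) (K (map h))"
  by (rule cp_ext[OF prime_hom[OF eq_hK[OF assms]]]) (rule K_hom)

lemma eq_id: "equivariant_fun S S id" by (simp add: equivariant_fun_def)

definition mr :: "(nat \<Rightarrow> val \<Rightarrow> nat \<times> val) \<Rightarrow> nat \<Rightarrow> val \<Rightarrow> nat \<Rightarrow> val \<Rightarrow> nat \<times> val" where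
  "mr \<delta> q0 y0 q x = (if kind x = 0 then \<delta> q (dval x) else if kind x = 3 then (q0, snd (\<delta> q (dval x)))
     else if kind x = 2 then (q0, y0) else (q, y0))"
definition abstr :: "val \<Rightarrow> val" where
  "abstr x = (if kind x = 0 \<or> kind x = 3 then x else if kind x = 2 then VInr (VInl (VInr VUnit))
     else VInr (VInl (VInl VUnit)))"
definition postM :: "val \<Rightarrow> val" where
  "postM v = (if kind (vfst v) = 0 then VInl (vsnd v) else if kind (vfst v) = 3 then VInr (VInr (vsnd v))
     else vfst v)"

lemma kind_abstr[simp]: "kind (abstr x) = kind x"
  using kind_cases[of x] by (auto simp: abstr_def)
lemma abstr_D[simp]: "kind x = 0 \<or> kind x = 3 \<Longrightarrow> abstr x = x"
  by (simp add: abstr_def)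

lemma mealy_rel: "gscan (resetd \<delta> q0) q w = map2 (\<lambda>x y. postM (VPair x y)) w (gscan (mr \<delta> q0 y0) q (map abstr w))"
proof (induction w arbitrary: q)
  case (Cons a w) then show ?case using kind_cases[of a] by (auto simp: mr_def postM_def)
qed simp

lemma cp_mealyK:
  assumes "atomless X" "atomless Y" "finite Q" "q0 \<in> Q"
    "\<forall>q x. q \<in> Q \<longrightarrow> elem X x \<longrightarrow> fst (\<delta> q x) \<in> Q \<and> elem Y (snd (\<delta> q x))"
  shows "cp (KA X D) (KA Y D) (K (mealy \<delta> q0))"
proof -
  obtain y0 where y0: "elem Y y0" using pof_nonempty by blast
  let ?pre = "\<lambda>x. VPair x (abstr x)"
  have c1: "cp (KA X D) (PProd (KA X D) (KA X PUnit)) (map ?pre)"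
  proof (rule prime_hom)
    show "equivariant_fun (KA X D) (PProd (KA X D) (KA X PUnit)) ?pre"
      unfolding equivariant_fun_def
    proof (intro conjI allI impI)
      fix x assume "elem (KA X D) x"
      then show "elem (PProd (KA X D) (KA X PUnit)) (?pre x)"
        by (cases rule: elem_KA_cases) (auto simp: abstr_def)
    next
      fix \<pi> :: "nat \<Rightarrow> nat" and x assume "elem (KA X D) x"
      then show "?pre (act \<pi> x) = act \<pi> (?pre x)"
        by (cases rule: elem_KA_cases) (auto simp: abstr_def)
    qed
  qed
  have c2: "cp (PProd (KA X D) (KA X PUnit)) (PProd (KA X D) Y) (par (map id) (mealy (mr \<delta> q0 y0) q0))"
  proof (rule comp_par)
    show "cp (KA X D) (KA X D) (map id)" by (rule prime_hom[OF eq_id])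
    show "cp (KA X PUnit) Y (mealy (mr \<delta> q0 y0) q0)"
    proof (rule prime_mealy)
      show "atomless (KA X PUnit)" using assms(1) by simp
      show "\<forall>q x. q \<in> Q \<longrightarrow> elem (KA X PUnit) x \<longrightarrow>
          fst (mr \<delta> q0 y0 q x) \<in> Q \<and> elem Y (snd (mr \<delta> q0 y0 q x))"
      proof (intro allI impI)
        fix q x assume q: "q \<in> Q" and xe: "elem (KA X PUnit) x"
        from xe show "fst (mr \<delta> q0 y0 q x) \<in> Q \<and> elem Y (snd (mr \<delta> q0 y0 q x))"
          using q assms(4,5) y0 by (cases rule: elem_KA_cases) (auto simp: mr_def)
      qed
    qed (use assms in auto)
  qed
  have c3: "cp (PProd (KA X D) Y) (KA Y D) (map postM)"
  proof (rule prime_hom)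
    show "equivariant_fun (PProd (KA X D) Y) (KA Y D) postM"
      unfolding equivariant_fun_def
    proof (intro conjI allI impI)
      fix v assume "elem (PProd (KA X D) Y) v"
      then obtain x y where v: "v = VPair x y" "elem (KA X D) x" "elem Y y" by auto
      from v(2) show "elem (KA Y D) (postM v)" using v by (cases rule: elem_KA_cases) (auto simp: postM_def)
    next
      fix \<pi> :: "nat \<Rightarrow> nat" and v assume "elem (PProd (KA X D) Y) v"
      then obtain x y where v: "v = VPair x y" "elem (KA X D) x" "elem Y y" by auto
      from v(2) show "postM (act \<pi> v) = act \<pi> (postM v)" using v
        by (cases rule: elem_KA_cases) (auto simp: postM_def)
    qed
  qed
  have c: "cp (KA X D) (KA Y D) (map postM \<circ> (par (map id) (mealy (mr \<delta> q0 y0) q0) \<circ> map ?pre))"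
    by (rule comp_seq[OF comp_seq[OF c1 c2] c3])
  show ?thesis
  proof (rule cp_ext[OF c])
    fix w
    have "K (mealy \<delta> q0) w = gscan (resetd \<delta> q0) q0 w" by (simp add: mealy_gscan K_gscan)
    also have "\<dots> = map2 (\<lambda>x y. postM (VPair x y)) w (gscan (mr \<delta> q0 y0) q0 (map abstr w))"
      by (rule mealy_rel)
    also have "\<dots> = (map postM \<circ> (par (map id) (mealy (mr \<delta> q0 y0) q0) \<circ> map ?pre)) w"
      by (simp add: par_def map_map2 mealy_gscan o_def split: prod.split)
    finally show "K (mealy \<delta> q0) w = (map postM \<circ> (par (map id) (mealy (mr \<delta> q0 y0) q0) \<circ> map ?pre)) w" .
  qed
qed



abbreviation XP :: pof where "XP \<equiv> PSum PAtom (PSum PUnit PUnit)"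
abbreviation YP :: pof where "YP \<equiv> PSum PAtom PUnit"

definition convP :: "val \<Rightarrow> val" where
  "convP x = (if kind x = 0 then dval x else if kind x = 1 then eps else down)"
definition postP :: "val \<Rightarrow> val" where
  "postP v = (if kind (vfst v) = 0 then VInl (vsnd v)
     else if kind (vfst v) = 3 then VInr (VInr (if dval (vfst v) = down then vsnd v else bot))
     else vfst v)"

lemma pstep_eps[simp]: "pstep s eps = (s, bot)" by (simp add: pstep_def)
lemma pstep_down[simp]: "pstep s down = (None, case s of Some v \<Rightarrow> v | None \<Rightarrow> bot)"
  by (simp add: pstep_def)
lemma pstep_snd: "x \<noteq> down \<Longrightarrow> snd (pstep s x) = bot" by (simp add: pstep_def)

lemma prop_rel: "gscan (resetd pstep None) s w = map2 (\<lambda>x y. postP (VPair x y)) w (gscan pstep s (map convP w))"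
proof (induction w arbitrary: s)
  case (Cons a w)
  show ?case using kind_cases[of a]
  proof (elim disjE)
    assume "kind a = 3"
    then show ?case using Cons pstep_snd[of "dval a" s]
      by (cases "dval a = down") (auto simp: convP_def postP_def)
  qed (use Cons in \<open>auto simp: convP_def postP_def\<close>)
qed simp

lemma cp_propK: "cp (KA XP D) (KA YP D) (K propagate)"
proof -
  let ?pre = "\<lambda>x. VPair x (convP x)"
  have c1: "cp (KA XP D) (PProd (KA XP D) XP) (map ?pre)"
  proof (rule prime_hom)
    show "equivariant_fun (KA XP D) (PProd (KA XP D) XP) ?pre"
      unfolding equivariant_fun_def
    proof (intro conjI allI impI)
      fix x assume "elem (KA XP D) x"
      then show "elem (PProd (KA XP D) XP) (?pre x)"
        by (cases rule: elem_KA_cases) (auto simp: convP_def eps_def down_def)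
    next
      fix \<pi> :: "nat \<Rightarrow> nat" and x assume "elem (KA XP D) x"
      then show "?pre (act \<pi> x) = act \<pi> (?pre x)"
        by (cases rule: elem_KA_cases) (auto simp: convP_def)
    qed
  qed
  have c2: "cp (PProd (KA XP D) XP) (PProd (KA XP D) YP) (par (map id) propagate)"
    by (rule comp_par[OF prime_hom[OF eq_id] prime_prop])
  have c3: "cp (PProd (KA XP D) YP) (KA YP D) (map postP)"
  proof (rule prime_hom)
    show "equivariant_fun (PProd (KA XP D) YP) (KA YP D) postP"
      unfolding equivariant_fun_def
    proof (intro conjI allI impI)
      fix v assume "elem (PProd (KA XP D) YP) v"
      then obtain x y where v: "v = VPair x y" "elem (KA XP D) x" "elem YP y" by auto
      from v(2) show "elem (KA YP D) (postP v)" using v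
        by (cases rule: elem_KA_cases) (auto simp: postP_def bot_def)
    next
      fix \<pi> :: "nat \<Rightarrow> nat" and v assume "elem (PProd (KA XP D) YP) v"
      then obtain x y where v: "v = VPair x y" "elem (KA XP D) x" "elem YP y" by auto
      from v(2) show "postP (act \<pi> v) = act \<pi> (postP v)" using v
        by (cases rule: elem_KA_cases) (auto simp: postP_def)
    qed
  qed
  have c: "cp (KA XP D) (KA YP D) (map postP \<circ> (par (map id) propagate \<circ> map ?pre))"
    by (rule comp_seq[OF comp_seq[OF c1 c2] c3])
  show ?thesis
  proof (rule cp_ext[OF c])
    fix w
    have "K propagate w = gscan (resetd pstep None) None w"
      by (simp add: propagate_gscan[abs_def] K_gscan)
    also have "\<dots> = map2 (\<lambda>x y. postP (VPair x y)) w (gscan pstep None (map convP w))"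
      by (rule prop_rel)
    also have "\<dots> = (map postP \<circ> (par (map id) propagate \<circ> map ?pre)) w"
      by (simp add: par_def map_map2 propagate_gscan o_def split: prod.split)
    finally show "K propagate w = (map postP \<circ> (par (map id) propagate \<circ> map ?pre)) w" .
  qed
qed



lemma noR_kinds: "\<forall>x\<in>set u. \<not> isR x \<Longrightarrow> map kind u' = map kind u \<Longrightarrow> \<forall>x\<in>set u'. \<not> isR x"
proof
  fix x assume a: "\<forall>x\<in>set u. \<not> isR x" "map kind u' = map kind u" and x: "x \<in> set u'"
  then have "kind x \<in> set (map kind u)" by (metis image_eqI list.set_map)
  then obtain y where "y \<in> set u" "kind y = kind x" by auto
  then show "\<not> isR x" using a by (auto simp: isR_def)
qed

lemma reins_split:
  assumes "\<forall>x\<in>set u. \<not> isR x" "isR r"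
  obtains u' r' where "reins ys (u @ [r]) = u' @ [r']" "\<forall>x\<in>set u'. \<not> isR x" "isR r'"
proof -
  have k: "map kind (reins ys (u @ [r])) = map kind u @ [kind r]" by (simp add: kinds_reins)
  obtain u' r' where e: "reins ys (u @ [r]) = u' @ [r']"
    by (metis length_reins length_append_singleton rev_exhaust list.size(3) nat.distinct(1))
  with k have "map kind u' = map kind u" "kind r' = kind r" by auto
  then show ?thesis using that[OF e] noR_kinds[OF assms(1)] assms(2) by (auto simp: isR_def)
qed

lemma K_seq:
  assumes f: "cp X Y f"
  shows "w \<in> words (KA X D) \<Longrightarrow> K (g \<circ> f) w = K g (K f w)"
proof (induction w rule: block_induct[where p = "\<lambda>x. \<not> isR x"])
  case (1 u)
  then have nr: "\<forall>x\<in>set u. \<not> isR x" by simp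
  have l: "length (f (datas u)) = length (datas u)"
    using cp_words[OF f datas_words[OF 1(2)]] by simp
  show ?case using K_noR[OF nr] K_noR[OF reins_noR[OF nr]] datas_reins[OF l] by simp
next
  case (2 u r rest)
  then have nr: "\<forall>x\<in>set u. \<not> isR x" and rr: "isR r" and rw: "rest \<in> words (KA X D)"
    and vw: "u @ [r] \<in> words (KA X D)" by auto
  let ?ys = "f (datas (u @ [r]))"
  have l: "length ?ys = length (datas (u @ [r]))"
    using cp_words[OF f datas_words[OF vw]] by simp
  obtain u' r' where e: "reins ?ys (u @ [r]) = u' @ [r']" and nr': "\<forall>x\<in>set u'. \<not> isR x"
    and rr': "isR r'" using reins_split[OF nr rr] by blast
  have "K g (K f (u @ r # rest)) = K g (u' @ r' # K f rest)"
    using K_R[OF nr rr, of f] e by simp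
  also have "\<dots> = reins (g (datas (u' @ [r']))) (u' @ [r']) @ K g (K f rest)"
    by (rule K_R[OF nr' rr'])
  also have "\<dots> = reins (g ?ys) (u @ [r]) @ K g (K f rest)"
    using datas_reins[OF l] e[symmetric] by simp
  finally show ?case using K_R[OF nr rr, of "g \<circ> f" rest] 2(3)[OF rw] by (simp add: comp_def)
qed

lemma K_ext:
  assumes "\<forall>w\<in>words S. g w = f w"
  shows "w \<in> words (KA S D) \<Longrightarrow> K g w = K f w"
proof (induction w rule: block_induct[where p = "\<lambda>x. \<not> isR x"])
  case (1 u)
  then show ?case using K_noR[of u] assms datas_words[OF 1(2)] by simp
next
  case (2 u r rest)
  then have nr: "\<forall>x\<in>set u. \<not> isR x" and rr: "isR r" and rw: "rest \<in> words (KA S D)"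
    and vw: "u @ [r] \<in> words (KA S D)" by auto
  show ?case using K_R[OF nr rr, of g] K_R[OF nr rr, of f] assms datas_words[OF vw] 2(3)[OF rw]
    by simp
qed



definition post2 :: "val \<Rightarrow> val" where
  "post2 v = (if isD (vfst v) \<and> isD (vsnd v) then tagas (vfst v) (VPair (dval (vfst v)) (dval (vsnd v)))
     else if isD (vfst v) then vsnd v else vfst v)"

lemma kind_hK[simp]: "kind (hK \<phi> x) = kind x"
  using kind_cases[of x] by (auto simp: hK_def)
lemma isD_hK[simp]: "isD (hK \<phi> x) = isD x" by (simp add: isD_def)
lemma isR_hK[simp]: "isR (hK \<phi> x) = isR x" by (simp add: isR_def)
lemma hK_nD[simp]: "\<not> isD x \<Longrightarrow> hK \<phi> x = x" by (simp add: hK_def isD_def)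
lemma dval_hK[simp]: "isD x \<Longrightarrow> dval (hK \<phi> x) = \<phi> (dval x)" by (auto simp: hK_def isD_def)
lemma tagas_kind: "kind a = kind b \<Longrightarrow> tagas a y = tagas b y" by (simp add: tagas_def)

lemma datas_hK: "datas (map (hK \<phi>) u) = map \<phi> (datas u)"
  by (induction u) (auto simp: datas_def)

lemma map2_append: "length a = length c \<Longrightarrow> map2 g (a @ b) (c @ d) = map2 g a c @ map2 g b d"
  by simp

lemma seg_par:
  "length ys1 = length (datas v) \<Longrightarrow> length ys2 = length (datas v) \<Longrightarrow>
   map2 (\<lambda>a b. post2 (VPair a b)) (reins ys1 (map (hK vfst) v)) (reins ys2 (map (hK vsnd) v))
   = reins (map2 VPair ys1 ys2) v"
proof (induction v arbitrary: ys1 ys2)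
  case Nil then show ?case by simp
next
  case (Cons x v)
  show ?case
  proof (cases "isD x")
    case True
    then obtain y1 ys1' y2 ys2' where "ys1 = y1 # ys1'" "ys2 = y2 # ys2'"
      using Cons.prems by (cases ys1; cases ys2) (auto simp: datas_def)
    then show ?thesis using Cons True
      by (auto simp: datas_def post2_def tagas_kind[of "hK _ x" x])
  next
    case False then show ?thesis using Cons by (auto simp: datas_def post2_def)
  qed
qed

lemma words_vfst: "w \<in> words (PProd S1 S2) \<Longrightarrow> map vfst w \<in> words S1 \<and> map vsnd w \<in> words S2"
  by (induction w) auto

lemma K_par:
  assumes f1: "cp S1 T1 f1" and f2: "cp S2 T2 f2"
  shows "w \<in> words (KA (PProd S1 S2) D) \<Longrightarrow> K (par f1 f2) w =
    map2 (\<lambda>a b. post2 (VPair a b)) (K f1 (map (hK vfst) w)) (K f2 (map (hK vsnd) w))"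
proof -
  have seg: "reins (par f1 f2 (datas v)) v =
    map2 (\<lambda>a b. post2 (VPair a b)) (reins (f1 (datas (map (hK vfst) v))) (map (hK vfst) v))
       (reins (f2 (datas (map (hK vsnd) v))) (map (hK vsnd) v))"
    if vw: "v \<in> words (KA (PProd S1 S2) D)" for v
  proof -
    have dw: "map vfst (datas v) \<in> words S1" "map vsnd (datas v) \<in> words S2"
      using words_vfst[OF datas_words[OF vw]] by auto
    have l1: "length (f1 (map vfst (datas v))) = length (datas v)"
      using cp_words[OF f1 dw(1)] by simp
    have l2: "length (f2 (map vsnd (datas v))) = length (datas v)"
      using cp_words[OF f2 dw(2)] by simp
    show ?thesis unfolding datas_hK seg_par[OF l1 l2] by (simp add: par_def)
  qed
  show "w \<in> words (KA (PProd S1 S2) D) \<Longrightarrow> ?thesis"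
  proof (induction w rule: block_induct[where p = "\<lambda>x. \<not> isR x"])
    case (1 u)
    then have nr: "\<forall>x\<in>set u. \<not> isR x" by simp
    have nr1: "\<forall>x\<in>set (map (hK \<phi>) u). \<not> isR x" for \<phi> using nr by simp
    show ?case using K_noR[OF nr] K_noR[OF nr1] seg[OF 1(2)] by simp
  next
    case (2 u r rest)
    then have nr: "\<forall>x\<in>set u. \<not> isR x" and rr: "isR r" and rw: "rest \<in> words (KA (PProd S1 S2) D)"
      and vw: "u @ [r] \<in> words (KA (PProd S1 S2) D)" by auto
    have nr1: "\<forall>x\<in>set (map (hK \<phi>) u). \<not> isR x" for \<phi> using nr by simp
    have rr1: "isR (hK \<phi> r)" for \<phi> using rr by simp
    have e: "K g (map (hK \<phi>) (u @ r # rest)) =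
      reins (g (datas (map (hK \<phi>) (u @ [r])))) (map (hK \<phi>) (u @ [r])) @ K g (map (hK \<phi>) rest)"
      for g \<phi> using K_R[OF nr1 rr1, where f=g and rest="map (hK \<phi>) rest"] by simp
    show ?case unfolding e K_R[OF nr rr] seg[OF vw] 2(3)[OF rw]
      by (rule map2_append[symmetric]) simp
  qed
qed

lemma cp_parK:
  assumes f1: "cp S1 T1 f1" and f2: "cp S2 T2 f2"
    and IH1: "cp (KA S1 D) (KA T1 D) (K f1)" and IH2: "cp (KA S2 D) (KA T2 D) (K f2)"
  shows "cp (KA (PProd S1 S2) D) (KA (PProd T1 T2) D) (K (par f1 f2))"
proof -
  let ?pre = "\<lambda>x. VPair (hK vfst x) (hK vsnd x)"
  have c1: "cp (KA (PProd S1 S2) D) (PProd (KA S1 D) (KA S2 D)) (map ?pre)"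
  proof (rule prime_hom)
    show "equivariant_fun (KA (PProd S1 S2) D) (PProd (KA S1 D) (KA S2 D)) ?pre"
      unfolding equivariant_fun_def
    proof (intro conjI allI impI)
      fix x assume "elem (KA (PProd S1 S2) D) x"
      then show "elem (PProd (KA S1 D) (KA S2 D)) (?pre x)"
        by (cases rule: elem_KA_cases) (auto simp: hK_def)
    next
      fix \<pi> :: "nat \<Rightarrow> nat" and x assume "elem (KA (PProd S1 S2) D) x"
      then show "?pre (act \<pi> x) = act \<pi> (?pre x)"
        by (cases rule: elem_KA_cases) (auto simp: hK_def)
    qed
  qed
  have c2: "cp (PProd (KA S1 D) (KA S2 D)) (PProd (KA T1 D) (KA T2 D)) (par (K f1) (K f2))"
    by (rule comp_par[OF IH1 IH2])
  have c3: "cp (PProd (KA T1 D) (KA T2 D)) (KA (PProd T1 T2) D) (map post2)"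
  proof (rule prime_hom)
    show "equivariant_fun (PProd (KA T1 D) (KA T2 D)) (KA (PProd T1 T2) D) post2"
      unfolding equivariant_fun_def
    proof (intro conjI allI impI)
      fix v assume "elem (PProd (KA T1 D) (KA T2 D)) v"
      then obtain x y where v: "v = VPair x y" "elem (KA T1 D) x" "elem (KA T2 D) y" by auto
      from v(2) show "elem (KA (PProd T1 T2) D) (post2 v)" using v(1,3)
        by (cases rule: elem_KA_cases; cases rule: elem_KA_cases[OF v(3)])
           (auto simp: post2_def isD_def tagas_def)
    next
      fix \<pi> :: "nat \<Rightarrow> nat" and v assume "elem (PProd (KA T1 D) (KA T2 D)) v"
      then obtain x y where v: "v = VPair x y" "elem (KA T1 D) x" "elem (KA T2 D) y" by auto
      from v(2) show "post2 (act \<pi> v) = act \<pi> (post2 v)" using v(1,3)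
        by (cases rule: elem_KA_cases; cases rule: elem_KA_cases[OF v(3)])
           (auto simp: post2_def isD_def tagas_def)
    qed
  qed
  have c: "cp (KA (PProd S1 S2) D) (KA (PProd T1 T2) D) (map post2 \<circ> (par (K f1) (K f2) \<circ> map ?pre))"
    by (rule comp_seq[OF comp_seq[OF c1 c2] c3])
  show ?thesis
  proof (rule cp_ext[OF c])
    fix w assume wm: "w \<in> words (KA (PProd S1 S2) D)"
    show "K (par f1 f2) w = (map post2 \<circ> (par (K f1) (K f2) \<circ> map ?pre)) w"
      using K_par[OF f1 f2 wm] by (simp add: par_def map_map2 o_def split: prod.split)
  qed
qed

theorem cpK: "cp X Y f \<Longrightarrow> cp (KA X D) (KA Y D) (K f)"
proof (induction rule: cp.induct)
  case (prime_hom S T h) then show ?case by (rule cp_homK)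
next
  case (prime_mealy S T Q q0 \<delta>) then show ?case by (rule cp_mealyK)
next
  case prime_prop then show ?case by (rule cp_propK)
next
  case (comp_seq S T f U g)
  have c: "cp (KA S D) (KA U D) (K g \<circ> K f)" by (rule cp.comp_seq[OF comp_seq.IH(1) comp_seq.IH(2)])
  show ?case by (rule cp_ext[OF c]) (simp add: K_seq[OF comp_seq.hyps(1), unfolded comp_def])
next
  case (comp_par S1 T1 f1 S2 T2 f2)
  then show ?case by (rule cp_parK)
next
  case (ext_dom S T f g)
  show ?case by (rule cp_ext[OF ext_dom.IH]) (rule K_ext[OF ext_dom.hyps(2)])
qed



lemma fst_splitD_ne: "fst (splitD w) \<noteq> []"
  by (induction w) (auto split: prod.splits)

lemma splitD_L: "\<forall>x\<in>set b. isL x \<Longrightarrow> splitD b = ([b], [])"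
  by (induction b) auto

lemma splitD_app: "\<forall>x\<in>set b. isL x \<Longrightarrow> \<not> isL a \<Longrightarrow>
  splitD (b @ a # rest) = (b # fst (splitD rest), a # snd (splitD rest))"
  by (induction b) (auto split: prod.splits)

lemma mapD_L: "\<forall>x\<in>set b. isL x \<Longrightarrow> mapD f b = map VInl (f (map unL b))"
  by (simp add: mapD_def splitD_L)

lemma mapD_app: assumes "\<forall>x\<in>set b. isL x" "\<not> isL a"
  shows "mapD f (b @ a # rest) = map VInl (f (map unL b)) @ a # mapD f rest"
proof -
  obtain bs as where s: "splitD rest = (bs, as)" by fastforce
  have ne: "bs \<noteq> []" using fst_splitD_ne[of rest] s by simp
  then obtain c cs where bs: "bs = c # cs" by (cases bs) auto
  show ?thesis unfolding mapD_def splitD_app[OF assms] s bs by simp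
qed

lemma mapD'_L: "\<forall>x\<in>set b. isL x \<Longrightarrow> mapD' f b = f b"
  by (simp add: mapD'_def splitD_L)

lemma mapD'_app: assumes "\<forall>x\<in>set b. isL x" "\<not> isL a"
  shows "mapD' f (b @ a # rest) = f (b @ [a]) @ mapD' f rest"
proof -
  obtain bs as where s: "splitD rest = (bs, as)" by fastforce
  have ne: "bs \<noteq> []" using fst_splitD_ne[of rest] s by simp
  show ?thesis unfolding mapD'_def splitD_app[OF assms] s using ne by simp
qed

fun inM :: "val \<Rightarrow> val" where
  "inM (VInl s) = VInl s" | "inM (VInr d) = VInr (VInl (VInr d))" | "inM x = x"
fun inS :: "val \<Rightarrow> val" where
  "inS (VInl s) = VInl s" | "inS (VInr d) = VInr (VInl (VInl d))" | "inS x = x"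
definition inP :: "val \<Rightarrow> val" where "inP x = (if isL x then VInl x else VInr (VInr x))"
fun outK :: "val \<Rightarrow> val" where
  "outK (VInl y) = VInl y"
| "outK (VInr (VInl (VInl d))) = VInr d"
| "outK (VInr (VInl (VInr d))) = VInr d"
| "outK (VInr (VInr y)) = VInl y"
| "outK x = x"
fun outP :: "val \<Rightarrow> val" where
  "outP (VInl y) = y"
| "outP (VInr (VInl (VInl d))) = d"
| "outP (VInr (VInl (VInr d))) = d"
| "outP (VInr (VInr y)) = y"
| "outP x = x"

lemma isL_kind: "isL x \<Longrightarrow> kind x = 0"
  by (cases x) auto

lemma allL_noR: "\<forall>x\<in>set b. isL x \<Longrightarrow> \<forall>x\<in>set b. \<not> isR x"
  using isL_kind by (auto simp: isR_def)

lemma datas_allL: "\<forall>x\<in>set b. isL x \<Longrightarrow> datas b = map unL b"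
proof (induction b)
  case (Cons x b) then show ?case using isL_kind[of x] by (cases x) (auto simp: datas_def isD_def)
qed (simp add: datas_def)

lemma reins_allL: "\<forall>x\<in>set b. isL x \<Longrightarrow> length ys = length b \<Longrightarrow> reins ys b = map VInl ys"
proof (induction b arbitrary: ys)
  case (Cons x b)
  then obtain y ys' where "ys = y # ys'" by (cases ys) auto
  then show ?case using Cons isL_kind[of x] by (auto simp: isD_def tagas_def)
qed simp

lemma outP_reins: "\<forall>x\<in>set u. isD x \<Longrightarrow> length ys = length u \<Longrightarrow> map outP (reins ys u) = ys"
proof (induction u arbitrary: ys)
  case (Cons x u)
  then obtain y ys' where "ys = y # ys'" by (cases ys) auto
  then show ?case using Cons by (auto simp: tagas_def)
qed simp

lemma words_sumL: "b \<in> words (PSum S D) \<Longrightarrow> \<forall>x\<in>set b. isL x \<Longrightarrow> map unL b \<in> words S"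
  by (induction b) auto

lemma mapD_K:
  assumes f: "cp S G f"
  shows "w \<in> words (PSum S D) \<Longrightarrow> mapD f w = map outK (K f (map inM w))"
proof (induction w rule: block_induct[where p = isL])
  case (1 b)
  have inb: "map inM b = b" using 1(1) by (induction b) (auto elim: isL.elims)
  have l: "length (f (map unL b)) = length b" using cp_words[OF f words_sumL[OF 1(2) 1(1)]] by simp
  show ?case unfolding inb mapD_L[OF 1(1)] K_noR[OF allL_noR[OF 1(1)]] datas_allL[OF 1(1)]
    reins_allL[OF 1(1) l] by simp
next
  case (2 b a rest)
  have inb: "map inM b = b" using 2(1) by (induction b) (auto elim: isL.elims)
  have bw: "b \<in> words (PSum S D)" and rw: "rest \<in> words (PSum S D)" and aw: "elem (PSum S D) a"
    using 2(4) by auto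
  obtain d where a: "a = VInr d" using aw 2(2) by auto
  have l: "length (f (map unL b)) = length b" using cp_words[OF f words_sumL[OF bw 2(1)]] by simp
  have "K f (map inM (b @ a # rest)) = K f (b @ VInr (VInl (VInr d)) # map inM rest)"
    using inb a by simp
  also have "\<dots> = reins (f (datas (b @ [VInr (VInl (VInr d))]))) (b @ [VInr (VInl (VInr d))]) @ K f (map inM rest)"
    by (rule K_R[OF allL_noR[OF 2(1)]]) (simp add: isR_def)
  also have "\<dots> = map VInl (f (map unL b)) @ VInr (VInl (VInr d)) # K f (map inM rest)"
    using datas_allL[OF 2(1)] reins_allL[OF 2(1) l]
    by (simp add: datas_def reins_append isD_def)
  finally show ?case using mapD_app[OF 2(1,2), of f rest] 2(3)[OF rw] a by simp
qed

lemma subD_K: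
  "w \<in> words (PSum S D) \<Longrightarrow> subD f w = map outK (K f (map inS w))"
proof -
  assume w: "w \<in> words (PSum S D)"
  have nr: "\<forall>x\<in>set (map inS w). \<not> isR x" using w by (induction w) (auto simp: isR_def)
  have d: "datas (map inS w) = map unL (filter isL w)" using w by (induction w) (auto simp: datas_def isD_def)
  have r: "map outK (reins ys (map inS w)) = reinsert ys w" for ys
    using w by (induction w arbitrary: ys) (auto simp: isD_def tagas_def)
  show ?thesis unfolding K_noR[OF nr] d r subD_def ..
qed

lemma mapD'_K:
  assumes f: "cp (PSum S D) G f"
  shows "w \<in> words (PSum S D) \<Longrightarrow> mapD' f w = map outP (K f (map inP w))"
proof (induction w rule: block_induct[where p = isL])
  case (1 b)
  have inb: "map inP b = map VInl b" using 1(1) by (simp add: inP_def)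
  have l: "length (f b) = length b" using cp_words[OF f 1(2)] by simp
  have nr: "\<forall>x\<in>set (map VInl b). \<not> isR x" by (auto simp: isR_def)
  have d: "datas (map VInl b) = b" by (induction b) (auto simp: datas_def isD_def)
  have o: "\<forall>x\<in>set (map VInl b). isD x" by (auto simp: isD_def)
  show ?case unfolding inb mapD'_L[OF 1(1)] K_noR[OF nr] d using outP_reins[OF o] l by simp
next
  case (2 b a rest)
  have inb: "map inP b = map VInl b" using 2(1) by (simp add: inP_def)
  have rw: "rest \<in> words (PSum S D)" and vw: "b @ [a] \<in> words (PSum S D)" using 2(4) by auto
  have l: "length (f (b @ [a])) = length b + 1" using cp_words[OF f vw] by simp
  have nr: "\<forall>x\<in>set (map VInl b). \<not> isR x" by (auto simp: isR_def)
  have d: "datas (map VInl b @ [VInr (VInr a)]) = b @ [a]" by (induction b) (auto simp: datas_def isD_def)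
  have o: "\<forall>x\<in>set (map VInl b @ [VInr (VInr a)]). isD x" by (auto simp: isD_def)
  have "K f (map inP (b @ a # rest)) = K f (map VInl b @ VInr (VInr a) # map inP rest)"
    using 2(2) by (simp add: inb) (simp add: inP_def)
  also have "\<dots> = reins (f (b @ [a])) (map VInl b @ [VInr (VInr a)]) @ K f (map inP rest)"
    using K_R[OF nr, of "VInr (VInr a)" f "map inP rest"] d by (simp add: isR_def)
  finally show ?case using mapD'_app[OF 2(1,2), of f rest] 2(3)[OF rw] outP_reins[OF o, of "f (b @ [a])"] l
    by simp
qed

lemma eq_inM: "equivariant_fun (PSum S D) (KA S D) inM"
  by (auto simp: equivariant_fun_def)
lemma eq_inS: "equivariant_fun (PSum S D) (KA S D) inS"
  by (auto simp: equivariant_fun_def)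
lemma eq_inP: "equivariant_fun (PSum S D) (KA (PSum S D) G) inP"
  by (auto simp: equivariant_fun_def inP_def)
lemma eq_outK: "equivariant_fun (KA G D) (PSum G D) outK"
  unfolding equivariant_fun_def
proof (intro conjI allI impI)
  fix x assume "elem (KA G D) x" then show "elem (PSum G D) (outK x)" by (cases rule: elem_KA_cases) auto
next
  fix \<pi> :: "nat \<Rightarrow> nat" and x assume "elem (KA G D) x"
  then show "outK (act \<pi> x) = act \<pi> (outK x)" by (cases rule: elem_KA_cases) auto
qed
lemma eq_outP: "equivariant_fun (KA G G) G outP"
  unfolding equivariant_fun_def
proof (intro conjI allI impI)
  fix x assume "elem (KA G G) x" then show "elem G (outP x)" by (cases rule: elem_KA_cases) auto
next
  fix \<pi> :: "nat \<Rightarrow> nat" and x assume "elem (KA G G) x"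
  then show "outP (act \<pi> x) = act \<pi> (outP x)" by (cases rule: elem_KA_cases) auto
qed

theorem mainTheorem12:
  fixes S G D :: pof and f :: "val list \<Rightarrow> val list"
  shows "(cp S G f \<longrightarrow> cp (PSum S D) (PSum G D) (mapD f) \<and> cp (PSum S D) (PSum G D) (subD f))
       \<and> (cp (PSum S D) G f \<longrightarrow> cp (PSum S D) G (mapD' f))"
proof (intro conjI impI)
  assume f: "cp S G f"
  have k: "cp (KA S D) (KA G D) (K f)" by (rule cpK[OF f])
  have c1: "cp (PSum S D) (PSum G D) (map outK \<circ> (K f \<circ> map inM))"
    by (rule comp_seq[OF comp_seq[OF prime_hom[OF eq_inM] k] prime_hom[OF eq_outK]])
  show "cp (PSum S D) (PSum G D) (mapD f)"
    by (rule cp_ext[OF c1]) (simp add: mapD_K[OF f])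
  have c2: "cp (PSum S D) (PSum G D) (map outK \<circ> (K f \<circ> map inS))"
    by (rule comp_seq[OF comp_seq[OF prime_hom[OF eq_inS] k] prime_hom[OF eq_outK]])
  show "cp (PSum S D) (PSum G D) (subD f)"
    by (rule cp_ext[OF c2]) (simp add: subD_K)
next
  assume f: "cp (PSum S D) G f"
  have k: "cp (KA (PSum S D) G) (KA G G) (K f)" by (rule cpK[OF f])
  have c: "cp (PSum S D) G (map outP \<circ> (K f \<circ> map inP))"
    by (rule comp_seq[OF comp_seq[OF prime_hom[OF eq_inP] k] prime_hom[OF eq_outP]])
  show "cp (PSum S D) G (mapD' f)"
    by (rule cp_ext[OF c]) (simp add: mapD'_K[OF f])
qed


end
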